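(* Let $n\ge p\ge 4$ and let $K_{n+1}=(V,E)$ be the complete graph on $V=\{0,\dots,n\}$. Then $\dim P^p_{[0,n]}(K_{n+1})=|E|-4$ if $p\le n-1$, and $\dim P^p_{[0,n]}(K_{n+1})=|E|-n-2$ if $p=n$.
   Context: For an undirected graph $G=(V,E)$ with $V=\{0,\dots,n\}$, a $[0,n]$-$p$-path is a simple (undirected) path from $0$ to $n$ with exactly $p$ edges, and $P^p_{[0,n]}(G)\subseteq\mathbb{R}^E$ is the convex hull of the incidence vectors of all $[0,n]$-$p$-paths in $G$. *)

theory Defs
  imports "HOL-Analysis.Analysis" "HOL-Library.Function_Algebras"
begin

text \<open>Real-valued functions on an index set form a real vector space
  (pointwise operations); R^E is embedded as functions supported on E.\<close>

instantiation "fun" :: (type, real_vector) real_vector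
begin
definition scaleR_fun :: "real \<Rightarrow> ('a \<Rightarrow> 'b) \<Rightarrow> 'a \<Rightarrow> 'b"
  where "scaleR_fun c f = (\<lambda>x. c *\<^sub>R f x)"
instance
  by standard (auto simp: scaleR_fun_def fun_eq_iff scaleR_add_right scaleR_add_left)
end

definition complete_edges :: "nat \<Rightarrow> nat set set" where
  "complete_edges n = {{i, j} | i j. i \<le> n \<and> j \<le> n \<and> i \<noteq> j}"

definition path_edges :: "nat list \<Rightarrow> nat set set" where
  "path_edges vs = {{vs ! i, vs ! Suc i} | i. Suc i < length vs}"

definition is_p_path :: "nat set set \<Rightarrow> nat \<Rightarrow> nat \<Rightarrow> nat list \<Rightarrow> bool" where
  "is_p_path E n p vs \<longleftrightarrow>
     length vs = p + 1 \<and> distinct vs \<and> set vs \<subseteq> {0..n} \<and>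
     hd vs = 0 \<and> last vs = n \<and>
     (\<forall>i. Suc i < length vs \<longrightarrow> {vs ! i, vs ! Suc i} \<in> E)"

definition incidence_vec :: "nat set set \<Rightarrow> nat set \<Rightarrow> real" where
  "incidence_vec F = (\<lambda>e. if e \<in> F then 1 else 0)"

definition path_polytope :: "nat set set \<Rightarrow> nat \<Rightarrow> nat \<Rightarrow> (nat set \<Rightarrow> real) set" where
  "path_polytope E n p =
     convex hull {incidence_vec (path_edges vs) | vs. is_p_path E n p vs}"

definition affine_dimension :: "('a::real_vector) set \<Rightarrow> int" where
  "affine_dimension S = (if S = {} then -1 else int (dim {x - y | x y. x \<in> S \<and> y \<in> S}))"

end

theory Submission
  imports Defs
begin

definition ch :: "nat \<Rightarrow> nat \<Rightarrow> nat set \<Rightarrow> real" where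
  "ch a b = (\<lambda>e. if e = {a,b} then 1 else 0)"

lemma ch_comm: "ch a b = ch b a"
  by (simp add: ch_def insert_commute)

fun pv :: "nat list \<Rightarrow> nat set \<Rightarrow> real" where
  "pv [] = 0" | "pv [x] = 0" | "pv (x # y # r) = ch x y + pv (y # r)"

lemma pv_app: "pv (xs @ y # ys) = pv (xs @ [y]) + pv (y # ys)"
  by (induction xs rule: pv.induct) (auto simp: algebra_simps)

lemma path_edges_Nil: "path_edges [] = {}" and path_edges_single: "path_edges [x] = {}"
  by (auto simp: path_edges_def)

lemma path_edges_Cons2: "path_edges (x#y#r) = insert {x,y} (path_edges (y#r))"
proof (rule set_eqI)
  fix e
  show "e \<in> path_edges (x#y#r) \<longleftrightarrow> e \<in> insert {x,y} (path_edges (y#r))"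
  proof
    assume "e \<in> path_edges (x#y#r)"
    then obtain i where i: "e = {(x#y#r)!i, (x#y#r)! Suc i}" "Suc i < length (x#y#r)"
      by (auto simp: path_edges_def)
    show "e \<in> insert {x,y} (path_edges (y#r))"
    proof (cases i)
      case 0 then show ?thesis using i by simp
    next
      case (Suc j) then show ?thesis using i by (auto simp: path_edges_def)
    qed
  next
    assume "e \<in> insert {x,y} (path_edges (y#r))"
    then show "e \<in> path_edges (x#y#r)"
    proof
      assume "e = {x,y}" then show ?thesis unfolding path_edges_def
        by (rule_tac CollectI, rule_tac exI[of _ 0]) auto
    next
      assume "e \<in> path_edges (y#r)"
      then obtain j where j: "e = {(y#r)!j, (y#r)! Suc j}" "Suc j < length (y#r)"
        by (auto simp: path_edges_def)
      show ?thesis unfolding path_edges_def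
        by (rule CollectI, rule exI[of _ "Suc j"]) (use j in auto)
    qed
  qed
qed

lemma path_edges_sub: "e \<in> path_edges vs \<Longrightarrow> e \<subseteq> set vs"
  by (auto simp: path_edges_def)

lemma incidence_pv: "distinct vs \<Longrightarrow> incidence_vec (path_edges vs) = pv vs"
proof (induction vs rule: pv.induct)
  case 1 then show ?case by (simp add: path_edges_Nil incidence_vec_def fun_eq_iff)
next
  case (2 x) then show ?case by (simp add: path_edges_single incidence_vec_def fun_eq_iff)
next
  case (3 x y r)
  have "{x,y} \<notin> path_edges (y#r)" using 3(2) path_edges_sub[of "{x,y}" "y#r"] by auto
  have gen: "incidence_vec (insert {x,y} F) = ch x y + incidence_vec F" if "{x,y} \<notin> F" for F
    using that by (auto simp: incidence_vec_def ch_def fun_eq_iff)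
  show ?case using 3 gen[OF \<open>{x,y} \<notin> path_edges (y#r)\<close>] by (simp add: path_edges_Cons2)
qed

lemma is_p_pathI:
  assumes "length vs = p+1" "distinct vs" "set vs \<subseteq> {0..n}" "hd vs = 0" "last vs = n"
  shows "is_p_path (complete_edges n) n p vs"
  unfolding is_p_path_def
proof (intro conjI allI impI)
  fix i assume i: "Suc i < length vs"
  have "vs ! i \<noteq> vs ! Suc i" using assms(2) i by (simp add: nth_eq_iff_index_eq)
  moreover have "vs ! i \<le> n" "vs ! Suc i \<le> n" proof -
    have "vs ! i \<in> set vs" "vs ! Suc i \<in> set vs" using i by auto
    then show "vs ! i \<le> n" "vs ! Suc i \<le> n" using assms(3) by auto
  qed
  ultimately show "{vs ! i, vs ! Suc i} \<in> complete_edges n" unfolding complete_edges_def by blast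
qed (use assms in auto)

abbreviation "KE n \<equiv> complete_edges n"
abbreviation "PPn n p \<equiv> path_polytope (complete_edges n) n p"
abbreviation "DS n p \<equiv> {x - y | x y. x \<in> PPn n p \<and> y \<in> PPn n p}"

lemma pv_in_PP: "is_p_path (KE n) n p vs \<Longrightarrow> pv vs \<in> PPn n p"
  unfolding path_polytope_def
  by (rule hull_inc) (auto simp: is_p_path_def incidence_pv[symmetric])

lemma move:
  assumes "is_p_path (KE n) n p (H @ w # M1 @ r # T)" "is_p_path (KE n) n p (H @ w # M2 @ r # T)"
  shows "pv (w # M1 @ [r]) - pv (w # M2 @ [r]) \<in> span (DS n p)"
proof -
  have eq: "pv (H @ w # M @ r # T) = pv (H @ [w]) + pv (w # M @ [r]) + pv (r # T)" for M
  proof -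
    have "pv (H @ w # M @ r # T) = pv (H @ [w]) + pv (w # M @ r # T)" by (rule pv_app)
    also have "pv (w # M @ r # T) = pv ((w # M) @ r # T)" by simp
    also have "\<dots> = pv ((w # M) @ [r]) + pv (r # T)" by (rule pv_app)
    finally show ?thesis by (simp only: append_Cons add.assoc)
  qed
  have "pv (H @ w # M1 @ r # T) - pv (H @ w # M2 @ r # T) \<in> DS n p"
    using pv_in_PP[OF assms(1)] pv_in_PP[OF assms(2)] by blast
  then have "pv (w # M1 @ [r]) - pv (w # M2 @ [r]) \<in> DS n p"
    unfolding eq by (simp add: fun_eq_iff)
  then show ?thesis by (rule real_vector.span_base)
qed

lemma filler:
  fixes U :: "nat set"
  assumes "finite U" "f \<le> card U"
  shows "\<exists>F. distinct F \<and> set F \<subseteq> U \<and> length F = f"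
proof -
  obtain B where "B \<subseteq> U" "card B = f" using obtain_subset_with_card_n[OF assms(2)] by blast
  moreover have "finite B" using \<open>B \<subseteq> U\<close> assms(1) finite_subset by blast
  ultimately show ?thesis by (intro exI[of _ "sorted_list_of_set B"]) auto
qed

lemma mk_path:
  assumes "distinct Z" "set Z \<subseteq> {1..<n}" "length Z + 1 = p" "0 < n"
  shows "is_p_path (KE n) n p (0 # Z @ [n])"
proof (rule is_p_pathI)
  have "0 \<notin> set Z" "n \<notin> set Z" using assms(2) by auto
  moreover have "0 \<noteq> n" using assms(4) by auto
  ultimately show "distinct (0 # Z @ [n])" using assms(1) by auto
qed (use assms in auto)

lemma window_exists:
  fixes n p f k w r :: nat and M1 M2 :: "nat list" and A :: "nat set"
  assumes w: "w = 0 \<or> w \<in> A" and r: "r = n \<or> r \<in> A" and wr: "w \<noteq> r" "\<not> (w = 0 \<and> r = n)"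
    and d: "distinct M1" "distinct M2" and MA: "set M1 \<subseteq> A" "set M2 \<subseteq> A"
    and A: "A \<subseteq> {1..<n}"
    and nw: "w \<notin> set M1" "w \<notin> set M2" and nr: "r \<notin> set M1" "r \<notin> set M2"
    and len: "length M1 = k" "length M2 = k"
    and cnt: "f + k + (if w = 0 then 0 else 1) + (if r = n then 0 else 1) + 1 = p"
    and cA: "f + card A \<le> n - 1"
  shows "\<exists>H T. is_p_path (KE n) n p (H @ w # M1 @ r # T) \<and> is_p_path (KE n) n p (H @ w # M2 @ r # T)"
proof -
  have fA: "finite A" using A finite_subset by blast
  have "card ({1..<n} - A) = n - 1 - card A" using A by (simp add: card_Diff_subset fA)
  then have "f \<le> card ({1..<n} - A)" using cA by linarith
  then obtain F where F: "distinct F" "set F \<subseteq> {1..<n} - A" "length F = f"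
    using filler[of "{1..<n} - A" f] by blast
  have FA: "set F \<inter> A = {}" "set F \<subseteq> {1..<n}" using F(2) by auto
  have MF: "set M1 \<inter> set F = {}" "set M2 \<inter> set F = {}" using MA FA by auto
  show ?thesis
  proof (cases "w = 0")
    case True
    then have rA: "r \<in> A" using r wr by auto
    have rF: "r \<notin> set F" using rA FA by auto
    have "is_p_path (KE n) n p ([] @ w # M @ r # F @ [n])"
      if "distinct M" "set M \<subseteq> A" "r \<notin> set M" "length M = k" "set M \<inter> set F = {}" for M
    proof -
      have "is_p_path (KE n) n p (0 # (M @ r # F) @ [n])"
        by (rule mk_path) (use that rA rF F FA A True cnt in auto)
      then show ?thesis using True by simp
    qed
    then show ?thesis using d MA nr len MF by blast
  next
    case False
    then have wA: "w \<in> A" using w by auto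
    have wF: "w \<notin> set F" using wA FA by auto
    show ?thesis
    proof (cases "r = n")
      case True
      have "is_p_path (KE n) n p ((0 # F) @ w # M @ r # [])"
        if "distinct M" "set M \<subseteq> A" "w \<notin> set M" "length M = k" "set M \<inter> set F = {}" for M
      proof -
        have "is_p_path (KE n) n p (0 # (F @ w # M) @ [n])"
          by (rule mk_path) (use that wA wF F FA A True False cnt in auto)
        then show ?thesis using True by simp
      qed
      then show ?thesis using d MA nw len MF by blast
    next
      case False2: False
      then have rA: "r \<in> A" using r by auto
      have rF: "r \<notin> set F" using rA FA by auto
      have "is_p_path (KE n) n p ((0 # F) @ w # M @ r # [n])"
        if "distinct M" "set M \<subseteq> A" "w \<notin> set M" "r \<notin> set M" "length M = k" "set M \<inter> set F = {}" for M
      proof -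
        have "is_p_path (KE n) n p (0 # (F @ w # M @ [r]) @ [n])"
          by (rule mk_path) (use that wA wF rA rF wr F FA A False2 False cnt in auto)
        then show ?thesis by simp
      qed
      then show ?thesis using d MA nw nr len MF by blast
    qed
  qed
qed

lemma win:
  fixes n p f k w r :: nat and M1 M2 :: "nat list" and A :: "nat set"
  assumes "w = 0 \<or> w \<in> A" and "r = n \<or> r \<in> A" and "w \<noteq> r" "\<not> (w = 0 \<and> r = n)"
    and "distinct M1" "distinct M2" and "set M1 \<subseteq> A" "set M2 \<subseteq> A"
    and "A \<subseteq> {1..<n}"
    and "w \<notin> set M1" "w \<notin> set M2" and "r \<notin> set M1" "r \<notin> set M2"
    and "length M1 = k" "length M2 = k"
    and "f + k + (if w = 0 then 0 else 1) + (if r = n then 0 else 1) + 1 = p"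
    and "f + card A \<le> n - 1"
  shows "pv (w # M1 @ [r]) - pv (w # M2 @ [r]) \<in> span (DS n p)"
proof -
  obtain H T where "is_p_path (KE n) n p (H @ w # M1 @ r # T)" "is_p_path (KE n) n p (H @ w # M2 @ r # T)"
    using window_exists[OF assms] by blast
  then show ?thesis by (rule move)
qed

lemma moveR:
  assumes a: "a = 0 \<or> a \<in> {1..<n}" and r: "r = n \<or> r \<in> {1..<n}" and bc: "b \<in> {1..<n}" "c \<in> {1..<n}"
    and dist: "distinct [a,b,c,r]" and ar: "\<not> (a = 0 \<and> r = n)" and p: "4 \<le> p" "p \<le> n - 1"
  shows "pv [a,b,r] - pv [a,c,r] \<in> span (DS n p)"
proof -
  have "pv (a # [b] @ [r]) - pv (a # [c] @ [r]) \<in> span (DS n p)"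
  proof (cases "a = 0")
    case True
    then have "r \<in> {1..<n}" using r ar by auto
    then show ?thesis
      by (intro win[where A = "{b,c,r}" and f = "p - 3" and k = 1]) (use True bc dist p in auto)
  next
    case False
    then have aI: "a \<in> {1..<n}" using a by auto
    show ?thesis
    proof (cases "r = n")
      case True
      then show ?thesis
        by (intro win[where A = "{a,b,c}" and f = "p - 3" and k = 1]) (use True False aI bc dist p in auto)
    next
      case False2: False
      then have "r \<in> {1..<n}" using r by auto
      then show ?thesis
        by (intro win[where A = "{a,b,c,r}" and f = "p - 4" and k = 1]) (use False2 False aI bc dist p in auto)
    qed
  qed
  then show ?thesis by simp
qed

lemma moveC:
  assumes a: "a = 0 \<or> a \<in> {1..<n}" and r: "r = n \<or> r \<in> {1..<n}" and bc: "b \<in> {1..<n}" "c \<in> {1..<n}"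
    and dist: "distinct [a,b,c,r]" and ar: "\<not> (a = 0 \<and> r = n)" and p: "4 \<le> p" "p \<le> n"
    and p5: "a = 0 \<or> r = n \<or> 5 \<le> p"
  shows "pv [a,b,c,r] - pv [a,c,b,r] \<in> span (DS n p)"
proof -
  have "pv (a # [b,c] @ [r]) - pv (a # [c,b] @ [r]) \<in> span (DS n p)"
  proof (cases "a = 0")
    case True
    then have "r \<in> {1..<n}" using r ar by auto
    then show ?thesis
      by (intro win[where A = "{b,c,r}" and f = "p - 4" and k = 2]) (use True bc dist p in auto)
  next
    case False
    then have aI: "a \<in> {1..<n}" using a by auto
    show ?thesis
    proof (cases "r = n")
      case True
      then show ?thesis
        by (intro win[where A = "{a,b,c}" and f = "p - 4" and k = 2]) (use True False aI bc dist p in auto)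
    next
      case False2: False
      then have "r \<in> {1..<n}" using r by auto
      then show ?thesis
        by (intro win[where A = "{a,b,c,r}" and f = "p - 5" and k = 2]) (use False2 False aI bc dist p p5 in auto)
    qed
  qed
  then show ?thesis by simp
qed

lemma F1:
  assumes a: "a = 0 \<or> a \<in> {1..<n}" and r: "r = n \<or> r \<in> {1..<n}" and bc: "b \<in> {1..<n}" "c \<in> {1..<n}"
    and dist: "distinct [a,b,c,r]" and ar: "\<not> (a = 0 \<and> r = n)" and p: "4 \<le> p" "p \<le> n - 1"
    and one: "a = 0 \<or> r = n"
  shows "ch a b - ch a c \<in> span (DS n p)"
proof -
  have R: "pv [a,b,r] - pv [a,c,r] \<in> span (DS n p)" by (rule moveR) (use assms in auto)
  have C: "pv [a,b,c,r] - pv [a,c,b,r] \<in> span (DS n p)" by (rule moveC) (use assms in auto)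
  have eq: "ch a b - ch a c = (1/2) *\<^sub>R ((pv [a,b,r] - pv [a,c,r]) + (pv [a,b,c,r] - pv [a,c,b,r]))"
    by (simp add: fun_eq_iff scaleR_fun_def ch_comm[of c b] algebra_simps)
  show ?thesis unfolding eq
    by (intro real_vector.span_scale real_vector.span_add R C)
qed

definition Zs :: "nat set set \<Rightarrow> nat set set \<Rightarrow> (nat set \<Rightarrow> real) set" where
  "Zs E S = {g. \<forall>e\<in>E - S. g e = 0}"

abbreviation "NN n p S \<equiv> span (DS n p \<union> Zs (KE n) S)"

lemma NN_D: "x \<in> span (DS n p) \<Longrightarrow> x \<in> NN n p S"
  using real_vector.span_mono[of "DS n p" "DS n p \<union> Zs (KE n) S"] by blast

lemma NN_S: "{a,b} \<in> S \<Longrightarrow> ch a b \<in> NN n p S"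
  by (rule real_vector.span_base) (auto simp: Zs_def ch_def)

lemma NN_comb: "x \<in> NN n p S \<Longrightarrow> y \<in> NN n p S \<Longrightarrow> z \<in> NN n p S \<Longrightarrow> w \<in> NN n p S \<Longrightarrow>
   x - y + z + w \<in> NN n p S"
  by (intro real_vector.span_add real_vector.span_diff)

lemma zero_NN: "0 \<in> NN n p S" by (rule real_vector.span_zero)

definition SA :: "nat \<Rightarrow> nat set set" where "SA n = {{0,n},{0,1},{1,n},{1,2}}"

lemma caseA_low:
  assumes p: "4 \<le> p" "p \<le> n - 1" and ij: "i \<le> n" "j \<le> n" "i \<noteq> j"
  shows "ch i j \<in> NN n p (SA n)"
proof -
  have n5: "5 \<le> n" using p by auto
  have S: "{x,y} \<in> SA n \<Longrightarrow> ch x y \<in> NN n p (SA n)" for x y by (rule NN_S)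
  have S0n: "ch 0 n \<in> NN n p (SA n)" and S01: "ch 0 1 \<in> NN n p (SA n)"
    and S1n: "ch 1 n \<in> NN n p (SA n)" and S12: "ch 1 2 \<in> NN n p (SA n)"
    by (rule NN_S, simp add: SA_def)+
  have S01': "ch 0 (Suc 0) \<in> NN n p (SA n)" and S1n': "ch (Suc 0) n \<in> NN n p (SA n)"
    and S12': "ch (Suc 0) 2 \<in> NN n p (SA n)" using S01 S1n S12 by simp_all
  have ii_a: "ch 1 a \<in> NN n p (SA n)" if a: "a \<in> {1..<n}" "a \<noteq> 1" for a
  proof (cases "a = 2")
    case True then show ?thesis by (intro S) (simp add: SA_def)
  next
    case False
    have h: "ch 1 a - ch 1 2 \<in> span (DS n p)" by (rule F1[where r = n]) (use a False p n5 in auto)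
    have "(ch 1 a - ch 1 2) - 0 + ch 1 2 + 0 \<in> NN n p (SA n)"
      by (rule NN_comb[OF NN_D[OF h]]) (auto simp: S01 S12 S01' S12' zero_NN)
    then show ?thesis by simp
  qed
  have ii: "ch a b \<in> NN n p (SA n)" if ab: "a \<in> {1..<n}" "b \<in> {1..<n}" "a \<noteq> b" for a b
  proof -
    consider "a = 1" | "b = 1" | "a \<noteq> 1" "b \<noteq> 1" by blast
    then show ?thesis
    proof cases
      case 1 then show ?thesis using ii_a[of b] ab by auto
    next
      case 2 then show ?thesis using ii_a[of a] ab by (auto simp: ch_comm)
    next
      case 3
      have h: "ch a b - ch a 1 \<in> span (DS n p)" by (rule F1[where r = n]) (use ab 3 p in auto)
      have "(ch a b - ch a 1) - 0 + ch 1 a + 0 \<in> NN n p (SA n)"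
        by (rule NN_comb[OF NN_D[OF h]]) (use ab 3 ii_a[of a] in \<open>auto simp: zero_NN\<close>)
      then show ?thesis by (simp add: ch_comm)
    qed
  qed
  have i0: "ch 0 b \<in> NN n p (SA n)" if b: "b \<in> {1..<n}" for b
  proof (cases "b = 1")
    case True then show ?thesis by (intro S) (simp add: SA_def)
  next
    case False
    have h: "ch 0 b - ch 0 1 \<in> span (DS n p)"
      by (rule F1[where r = "if b = 2 then 3 else 2"]) (use b False p n5 in auto)
    have "(ch 0 b - ch 0 1) - 0 + ch 0 1 + 0 \<in> NN n p (SA n)"
      by (rule NN_comb[OF NN_D[OF h]]) (auto simp: S01 S12 S01' S12' zero_NN)
    then show ?thesis by simp
  qed
  have iii: "ch a n \<in> NN n p (SA n)" if a: "a \<in> {1..<n}" for a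
  proof (cases "a = 1")
    case True then show ?thesis by (intro S) (simp add: SA_def)
  next
    case False
    define w where "w = (if a = 2 then 3 else (2::nat))"
    have w: "w \<in> {1..<n}" "w \<noteq> a" "w \<noteq> 1" using n5 by (auto simp: w_def)
    have h: "pv [w,a,n] - pv [w,1,n] \<in> span (DS n p)"
      by (rule moveR) (use a w False p n5 in auto)
    have "(pv [w,a,n] - pv [w,1,n]) - ch w a + ch w 1 + ch 1 n \<in> NN n p (SA n)"
      by (rule NN_comb[OF NN_D[OF h]]) (use a w False ii[of w a] ii[of w 1] in \<open>auto simp: S1n S1n'\<close>)
    moreover have "(pv [w,a,n] - pv [w,1,n]) - ch w a + ch w 1 + ch 1 n = ch a n"
      by (simp add: fun_eq_iff)
    ultimately show ?thesis by simp
  qed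
  consider "i = 0" "j = n" | "i = n" "j = 0" | "i = 0" "j \<in> {1..<n}" | "j = 0" "i \<in> {1..<n}"
    | "i = n" "j \<in> {1..<n}" | "j = n" "i \<in> {1..<n}" | "i \<in> {1..<n}" "j \<in> {1..<n}"
    using ij by fastforce
  then show ?thesis
  proof cases
    case 1 then show ?thesis using S0n by simp
  next
    case 2 then show ?thesis using S0n by (metis ch_comm)
  next
    case 3 then show ?thesis using i0 by simp
  next
    case 4 then have "ch 0 i \<in> NN n p (SA n)" using i0 by simp
    then show ?thesis using 4 by (metis ch_comm)
  next
    case 5 then have "ch j n \<in> NN n p (SA n)" using iii by simp
    then show ?thesis using 5 by (metis ch_comm)
  next
    case 6 then show ?thesis using iii by simp
  next
    case 7 then show ?thesis using ii ij by simp
  qed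
qed

lemma NN_comb2: "x \<in> NN n p S \<Longrightarrow> y \<in> NN n p S \<Longrightarrow> z \<in> NN n p S \<Longrightarrow> w \<in> NN n p S \<Longrightarrow>
   x - y + z - w \<in> NN n p S"
  by (intro real_vector.span_add real_vector.span_diff)

definition SB :: "nat \<Rightarrow> nat set set" where
  "SB n = {{0,n},{2,3}} \<union> {{1,v} | v. v \<le> n \<and> v \<noteq> 1}"

lemma caseB_low:
  assumes p: "4 \<le> n" and ij: "i \<le> n" "j \<le> n" "i \<noteq> j"
  shows "ch i j \<in> NN n n (SB n)"
proof -
  have S0n: "ch 0 n \<in> NN n n (SB n)" and S23: "ch 2 3 \<in> NN n n (SB n)"
    by (rule NN_S, simp add: SB_def)+
  have S1: "ch 1 v \<in> NN n n (SB n)" "ch v 1 \<in> NN n n (SB n)" if "v \<le> n" "v \<noteq> 1" for v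
    using NN_S[of 1 v "SB n" n n] that ch_comm[of v 1] by (auto simp: SB_def)
  have i: "ch y r - ch x r \<in> NN n n (SB n)"
    if xyr: "x \<in> {2..<n}" "y \<in> {2..<n}" "r \<in> {2..<n}" "x \<noteq> y" "x \<noteq> r" "y \<noteq> r" for x y r
  proof -
    have n5: "5 \<le> n" using xyr by auto
    have h: "pv [1,x,y,r] - pv [1,y,x,r] \<in> span (DS n n)"
      by (rule moveC) (use xyr n5 in auto)
    have "(pv [1,x,y,r] - pv [1,y,x,r]) - ch 1 x + ch 1 y - 0 \<in> NN n n (SB n)"
      by (rule NN_comb2[OF NN_D[OF h] S1(1) S1(1) zero_NN]) (use xyr in auto)
    moreover have "(pv [1,x,y,r] - pv [1,y,x,r]) - ch 1 x + ch 1 y - 0 = ch y r - ch x r"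
      by (simp add: fun_eq_iff ch_comm[of y x])
    ultimately show ?thesis by simp
  qed
  have t2: "ch 2 b \<in> NN n n (SB n)" if b: "b \<in> {2..<n}" "b \<noteq> 2" for b
  proof (cases "b = 3")
    case True then show ?thesis using S23 by simp
  next
    case False
    have "ch b 2 - ch 3 2 \<in> NN n n (SB n)" by (rule i) (use b False p in auto)
    moreover have "ch 3 2 \<in> NN n n (SB n)" using S23 by (metis ch_comm)
    ultimately have "ch b 2 \<in> NN n n (SB n)"
      using real_vector.span_add by fastforce
    then show ?thesis by (metis ch_comm)
  qed
  have ii: "ch a b \<in> NN n n (SB n)" if ab: "a \<in> {2..<n}" "b \<in> {2..<n}" "a \<noteq> b" for a b
  proof -
    consider "a = 2" | "b = 2" | "a \<noteq> 2" "b \<noteq> 2" by blast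
    then show ?thesis
    proof cases
      case 1 then show ?thesis using t2[of b] ab by auto
    next
      case 2 then have "ch 2 a \<in> NN n n (SB n)" using t2[of a] ab by auto
      then show ?thesis using 2 by (metis ch_comm)
    next
      case 3
      have "ch a b - ch 2 b \<in> NN n n (SB n)" by (rule i) (use ab 3 in auto)
      then show ?thesis using t2[of b] ab 3 real_vector.span_add by fastforce
    qed
  qed
  have iii: "ch 0 a \<in> NN n n (SB n)" if a: "a \<in> {2..<n}" for a
  proof -
    define r where "r = (if a = 2 then 3 else (2::nat))"
    have r: "r \<in> {2..<n}" "r \<noteq> a" using p a by (auto simp: r_def)
    have h: "pv [0,a,1,r] - pv [0,1,a,r] \<in> span (DS n n)"
      by (rule moveC) (use a r p in auto)
    have "(pv [0,a,1,r] - pv [0,1,a,r]) - ch 1 r + ch 0 1 - (- ch a r) \<in> NN n n (SB n)"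
      by (rule NN_comb2[OF NN_D[OF h] S1(1) S1(2)])
        (use a r p ii[of a r] real_vector.span_neg in auto)
    moreover have "(pv [0,a,1,r] - pv [0,1,a,r]) - ch 1 r + ch 0 1 - (- ch a r) = ch 0 a"
      by (simp add: fun_eq_iff ch_comm[of a "Suc 0"])
    ultimately show ?thesis by simp
  qed
  have iv: "ch a n \<in> NN n n (SB n)" if a: "a \<in> {2..<n}" for a
  proof -
    define w where "w = (if a = 2 then 3 else (2::nat))"
    have w: "w \<in> {2..<n}" "w \<noteq> a" using p a by (auto simp: w_def)
    have h: "pv [w,a,1,n] - pv [w,1,a,n] \<in> span (DS n n)"
      by (rule moveC) (use a w p in auto)
    have "ch w a - (pv [w,a,1,n] - pv [w,1,a,n]) + ch 1 n - ch w 1 \<in> NN n n (SB n)"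
      by (rule NN_comb2[OF _ NN_D[OF h] S1(1) S1(2)]) (use a w p ii[of w a] in auto)
    moreover have "ch w a - (pv [w,a,1,n] - pv [w,1,a,n]) + ch 1 n - ch w 1 = ch a n"
      by (simp add: fun_eq_iff ch_comm[of a "Suc 0"])
    ultimately show ?thesis by simp
  qed
  consider "i = 1" | "j = 1" | "i = 0" "j = n" | "i = n" "j = 0" | "i = 0" "j \<in> {2..<n}" | "j = 0" "i \<in> {2..<n}"
    | "i = n" "j \<in> {2..<n}" | "j = n" "i \<in> {2..<n}" | "i \<in> {2..<n}" "j \<in> {2..<n}"
    using ij by fastforce
  then show ?thesis
  proof cases
    case 1 then show ?thesis using S1(1)[of j] ij by simp
  next
    case 2 then show ?thesis using S1(2)[of i] ij by simp
  next
    case 3 then show ?thesis using S0n by simp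
  next
    case 4 then show ?thesis using S0n by (metis ch_comm)
  next
    case 5 then show ?thesis using iii by simp
  next
    case 6 then have "ch 0 i \<in> NN n n (SB n)" using iii by simp
    then show ?thesis using 6 by (metis ch_comm)
  next
    case 7 then have "ch j n \<in> NN n n (SB n)" using iv by simp
    then show ?thesis using 7 by (metis ch_comm)
  next
    case 8 then show ?thesis using iv by simp
  next
    case 9 then show ?thesis using ii ij by simp
  qed
qed

lemma sum_fun_apply': "(sum F A) x = sum (\<lambda>a. F a x) A"
  by (induction A rule: infinite_finite_induct) auto

lemma dim_assembly:
  fixes Dset :: "('a \<Rightarrow> real) set" and E S :: "'a set"
  assumes fin: "finite E" and SE: "S \<subseteq> E"
    and H1: "\<And>g e. g \<in> span Dset \<Longrightarrow> e \<notin> E \<Longrightarrow> g e = 0"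
    and H2: "\<And>g. g \<in> span Dset \<Longrightarrow> (\<forall>e. e \<notin> S \<longrightarrow> g e = 0) \<Longrightarrow> g = 0"
    and H3: "\<And>e. e \<in> E - S \<Longrightarrow> (\<lambda>x. if x = e then 1 else 0) \<in> span (Dset \<union> {g. \<forall>e\<in>E - S. g e = 0})"
  shows "dim Dset = card E - card S"
proof -
  define Z where "Z = {g :: 'a \<Rightarrow> real. \<forall>e\<in>E - S. g e = 0}"
  have subZ: "subspace Z"
    unfolding real_vector.subspace_def Z_def by (auto simp: scaleR_fun_def)
  have spZ: "span Z = Z" using subZ by (simp add: real_vector.span_eq_iff)
  have ex: "\<exists>v. v \<in> span Dset \<and> (\<forall>e'\<in>E-S. v e' = (if e' = e then 1 else 0))" if e: "e \<in> E - S" for e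
  proof -
    have "(\<lambda>x. if x = e then 1 else 0) \<in> span (Dset \<union> Z)" using H3[OF e] by (simp add: Z_def)
    then obtain x y where xy: "x \<in> span Dset" "y \<in> Z" "(\<lambda>x. if x = e then 1 else 0) = x + y"
      unfolding real_vector.span_Un spZ by blast
    have "\<forall>e'\<in>E-S. x e' = (if e' = e then 1 else 0)"
    proof
      fix e' assume e': "e' \<in> E - S"
      have "(if e' = e then 1 else 0) = x e' + y e'" using fun_cong[OF xy(3), of e'] by simp
      moreover have "y e' = 0" using xy(2) e' by (simp add: Z_def)
      ultimately show "x e' = (if e' = e then 1 else 0)" by simp
    qed
    then show ?thesis using xy(1) by blast
  qed
  then obtain v where v: "\<And>e. e \<in> E - S \<Longrightarrow> v e \<in> span Dset"
    "\<And>e e'. e \<in> E - S \<Longrightarrow> e' \<in> E - S \<Longrightarrow> v e e' = (if e' = e then 1 else 0)"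
    by metis
  define B where "B = v ` (E - S)"
  have inj: "inj_on v (E - S)"
  proof (rule inj_onI)
    fix e e' assume "e \<in> E - S" "e' \<in> E - S" "v e = v e'"
    then have "v e e = v e' e" by simp
    then show "e = e'" using v(2)[OF \<open>e \<in> E - S\<close> \<open>e \<in> E - S\<close>] v(2)[OF \<open>e' \<in> E - S\<close> \<open>e \<in> E - S\<close>]
      by (auto split: if_splits)
  qed
  have indep: "independent B"
    unfolding real_vector.dependent_def
  proof
    assume "\<exists>a\<in>B. a \<in> span (B - {a})"
    then obtain e where e: "e \<in> E - S" "v e \<in> span (B - {v e})" unfolding B_def by blast
    have sub: "subspace {f :: 'a \<Rightarrow> real. f e = 0}"
      unfolding real_vector.subspace_def by (auto simp: scaleR_fun_def)
    have "B - {v e} \<subseteq> {f. f e = 0}"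
    proof
      fix b assume "b \<in> B - {v e}"
      then obtain e' where e': "e' \<in> E - S" "b = v e'" "v e' \<noteq> v e" unfolding B_def by blast
      then have "e' \<noteq> e" by blast
      then show "b \<in> {f. f e = 0}" using v(2)[OF e'(1) e(1)] e' by simp
    qed
    then have "span (B - {v e}) \<subseteq> {f. f e = 0}" by (rule real_vector.span_minimal[OF _ sub])
    then have "v e e = 0" using e(2) by blast
    then show False using v(2)[OF e(1) e(1)] by simp
  qed
  have spB: "span B = span Dset"
  proof
    show "span B \<subseteq> span Dset"
      by (rule real_vector.span_minimal) (use v(1) in \<open>auto simp: B_def real_vector.subspace_span\<close>)
  next
    show "span Dset \<subseteq> span B"
    proof
      fix f assume f: "f \<in> span Dset"
      define h where "h = f - (\<Sum>e\<in>E-S. f e *\<^sub>R v e)"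
      have hD: "h \<in> span Dset" unfolding h_def
        by (intro real_vector.span_diff f real_vector.span_sum real_vector.span_scale v(1))
      have "\<forall>e. e \<notin> S \<longrightarrow> h e = 0"
      proof (intro allI impI)
        fix e assume eS: "e \<notin> S"
        show "h e = 0"
        proof (cases "e \<in> E")
          case True
          then have eES: "e \<in> E - S" using eS by simp
          have "(\<Sum>x\<in>E-S. f x *\<^sub>R v x) e = (\<Sum>x\<in>E-S. f x * v x e)"
            by (simp add: sum_fun_apply' scaleR_fun_def)
          also have "\<dots> = (\<Sum>x\<in>E-S. if x = e then f x else 0)"
            by (rule sum.cong) (use v(2) eES in auto)
          also have "\<dots> = f e" using eES fin by simp
          finally show ?thesis by (simp add: h_def)
        next
          case False then show ?thesis using H1[OF hD] by simp
        qed
      qed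
      then have "h = 0" by (rule H2[OF hD])
      then have "f = (\<Sum>e\<in>E-S. f e *\<^sub>R v e)" by (simp add: h_def)
      also have "\<dots> \<in> span B"
        by (intro real_vector.span_sum real_vector.span_scale real_vector.span_base) (auto simp: B_def)
      finally show "f \<in> span B" .
    qed
  qed
  have "dim Dset = dim (span Dset)" by simp
  also have "\<dots> = card B" using spB real_vector.dim_span_eq_card_independent[OF indep] by simp
  also have "\<dots> = card (E - S)" unfolding B_def using inj by (simp add: card_image)
  also have "\<dots> = card E - card S" using SE fin by (simp add: card_Diff_subset finite_subset)
  finally show ?thesis .
qed

lemma func_zero:
  fixes \<phi> :: "(nat set \<Rightarrow> real) \<Rightarrow> real"
  assumes add: "\<And>x y. \<phi> (x + y) = \<phi> x + \<phi> y" and sc: "\<And>c x. \<phi> (c *\<^sub>R x) = c * \<phi> x"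
    and val: "\<And>vs. is_p_path (KE n) n p vs \<Longrightarrow> \<phi> (pv vs) = c"
    and g: "g \<in> span (DS n p)"
  shows "\<phi> g = 0"
proof -
  have diff: "\<phi> (x - y) = \<phi> x - \<phi> y" for x y
    using add[of x "(-1) *\<^sub>R y"] sc[of "-1" y] by simp
  have cvx: "convex {x. \<phi> x = c}"
    unfolding convex_def
  proof (intro allI impI ballI)
    fix x y u v assume "x \<in> {x. \<phi> x = c}" "y \<in> {x. \<phi> x = c}" "0 \<le> (u::real)" "0 \<le> v" "u + v = 1"
    then have "\<phi> (u *\<^sub>R x + v *\<^sub>R y) = u * c + v * c" by (simp add: add sc)
    also have "\<dots> = (u + v) * c" by (rule distrib_right[symmetric])
    also have "\<dots> = c" using \<open>u + v = 1\<close> by simp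
    finally show "u *\<^sub>R x + v *\<^sub>R y \<in> {x. \<phi> x = c}" by simp
  qed
  have "PPn n p \<subseteq> {x. \<phi> x = c}"
    unfolding path_polytope_def
    by (rule hull_minimal[where S = convex, OF _ cvx]) (auto simp: is_p_path_def incidence_pv val)
  then have "DS n p \<subseteq> {x. \<phi> x = 0}"
  proof (intro subsetI)
    fix z assume P: "PPn n p \<subseteq> {x. \<phi> x = c}" and "z \<in> DS n p"
    then obtain x y where "z = x - y" "x \<in> PPn n p" "y \<in> PPn n p" by blast
    then show "z \<in> {x. \<phi> x = 0}" using P by (auto simp: diff)
  qed
  moreover have "subspace {x. \<phi> x = 0}"
    unfolding real_vector.subspace_def
  proof (intro conjI ballI allI)
    show "0 \<in> {x. \<phi> x = 0}" using sc[of 0 0] by simp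
  qed (auto simp: add sc)
  ultimately have "span (DS n p) \<subseteq> {x. \<phi> x = 0}" by (rule real_vector.span_minimal)
  then show ?thesis using g by blast
qed

definition deg :: "nat set set \<Rightarrow> nat \<Rightarrow> (nat set \<Rightarrow> real) \<Rightarrow> real" where
  "deg E v f = (\<Sum>e\<in>E. if v \<in> e then f e else 0)"
definition tot :: "nat set set \<Rightarrow> (nat set \<Rightarrow> real) \<Rightarrow> real" where
  "tot E f = (\<Sum>e\<in>E. f e)"

lemma deg_add: "deg E v (f + g) = deg E v f + deg E v g"
  unfolding deg_def by (simp add: sum.distrib[symmetric] if_distrib) (rule sum.cong, auto)
lemma deg_sc: "deg E v (c *\<^sub>R f) = c * deg E v f"
  unfolding deg_def sum_distrib_left by (rule sum.cong) (simp_all add: scaleR_fun_def)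
lemma tot_add: "tot E (f + g) = tot E f + tot E g"
  unfolding tot_def by (simp add: sum.distrib)
lemma tot_sc: "tot E (c *\<^sub>R f) = c * tot E f"
  unfolding tot_def sum_distrib_left by (rule sum.cong) (simp_all add: scaleR_fun_def)

lemma KE_mem: "i \<le> n \<Longrightarrow> j \<le> n \<Longrightarrow> i \<noteq> j \<Longrightarrow> {i,j} \<in> KE n"
  by (auto simp: complete_edges_def)
lemma KE_fin: "finite (KE n)"
  by (rule finite_subset[of _ "Pow {0..n}"]) (auto simp: complete_edges_def)

lemma deg_ch: assumes "a \<noteq> b" "a \<le> n" "b \<le> n"
  shows "deg (KE n) v (ch a b) = (if v = a \<or> v = b then 1 else 0)"
proof -
  have "deg (KE n) v (ch a b) = (\<Sum>e\<in>KE n. if e = {a,b} then (if v = a \<or> v = b then 1 else 0) else 0)"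
    unfolding deg_def by (rule sum.cong) (auto simp: ch_def)
  also have "\<dots> = (if v = a \<or> v = b then 1 else 0)" using KE_mem[OF assms(2,3,1)] KE_fin[of n] by simp
  finally show ?thesis .
qed

lemma tot_ch: assumes "a \<noteq> b" "a \<le> n" "b \<le> n"
  shows "tot (KE n) (ch a b) = 1"
proof -
  have "tot (KE n) (ch a b) = (\<Sum>e\<in>KE n. if e = {a,b} then 1 else 0)"
    unfolding tot_def by (rule sum.cong) (auto simp: ch_def)
  also have "\<dots> = 1" using KE_mem[OF assms(2,3,1)] KE_fin[of n] by simp
  finally show ?thesis .
qed

lemma deg_pv: "distinct vs \<Longrightarrow> set vs \<subseteq> {0..n} \<Longrightarrow> vs \<noteq> [] \<Longrightarrow>
  deg (KE n) v (pv vs) = 2 * (if v \<in> set vs then 1 else 0) - (if v = hd vs then 1 else 0) - (if v = last vs then 1 else 0)"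
proof (induction vs rule: pv.induct)
  case 1 then show ?case by simp
next
  case (2 x) then show ?case by (simp add: deg_def)
next
  case (3 x y r)
  have "deg (KE n) v (pv (x # y # r)) = deg (KE n) v (ch x y) + deg (KE n) v (pv (y # r))"
    by (simp add: deg_add)
  also have "deg (KE n) v (ch x y) = (if v = x \<or> v = y then 1 else 0)"
    by (rule deg_ch) (use 3(2,3) in auto)
  finally show ?case using 3 by (auto split: if_splits)
qed

lemma tot_pv: "distinct vs \<Longrightarrow> set vs \<subseteq> {0..n} \<Longrightarrow> vs \<noteq> [] \<Longrightarrow>
  tot (KE n) (pv vs) = real (length vs) - 1"
proof (induction vs rule: pv.induct)
  case 1 then show ?case by simp
next
  case (2 x) then show ?case by (simp add: tot_def)
next
  case (3 x y r)
  have "tot (KE n) (pv (x # y # r)) = tot (KE n) (ch x y) + tot (KE n) (pv (y # r))"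
    by (simp add: tot_add)
  also have "tot (KE n) (ch x y) = 1"
    by (rule tot_ch) (use 3(2,3) in auto)
  finally show ?case using 3 by auto
qed


lemma sum_single: "finite A \<Longrightarrow> a \<in> A \<Longrightarrow> (\<And>x. x \<in> A \<Longrightarrow> x \<noteq> a \<Longrightarrow> f x = 0) \<Longrightarrow> sum f A = f a"
  by (simp add: sum.remove sum.neutral)

lemma sum_two: "finite A \<Longrightarrow> a \<in> A \<Longrightarrow> b \<in> A \<Longrightarrow> a \<noteq> b \<Longrightarrow>
  (\<And>x. x \<in> A \<Longrightarrow> x \<noteq> a \<Longrightarrow> x \<noteq> b \<Longrightarrow> f x = 0) \<Longrightarrow> sum f A = f a + f b"
proof -
  assume A: "finite A" "a \<in> A" "b \<in> A" "a \<noteq> b" and z: "\<And>x. x \<in> A \<Longrightarrow> x \<noteq> a \<Longrightarrow> x \<noteq> b \<Longrightarrow> f x = 0"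
  have "sum f A = f a + sum f (A - {a})" using A by (simp add: sum.remove)
  also have "sum f (A - {a}) = f b" by (rule sum_single) (use A z in auto)
  finally show ?thesis .
qed

lemma path_facts:
  assumes "is_p_path (KE n) n p vs"
  shows "distinct vs" "set vs \<subseteq> {0..n}" "vs \<noteq> []" "hd vs = 0" "last vs = n" "length vs = p + 1"
  using assms by (auto simp: is_p_path_def)

lemma pv_0n:
  assumes P: "is_p_path (KE n) n p vs" and p: "2 \<le> p"
  shows "pv vs {0,n} = 0"
proof -
  note f = path_facts[OF P]
  have v0: "vs ! 0 = 0" using f by (simp add: hd_conv_nth[symmetric])
  have vp: "vs ! p = n" using f by (simp add: last_conv_nth)
  have "{0,n} \<notin> path_edges vs"
  proof
    assume "{0,n} \<in> path_edges vs"
    then obtain i where i: "{0,n} = {vs ! i, vs ! Suc i}" "Suc i < length vs" by (auto simp: path_edges_def)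
    have inj: "vs ! a = vs ! b \<Longrightarrow> a < length vs \<Longrightarrow> b < length vs \<Longrightarrow> a = b" for a b
      using f(1) by (simp add: nth_eq_iff_index_eq)
    from i(1) consider "vs ! i = 0" "vs ! Suc i = n" | "vs ! i = n" "vs ! Suc i = 0"
      by (auto simp: doubleton_eq_iff)
    then show False
    proof cases
      case 1
      have "i = 0" by (rule inj) (use 1 v0 i(2) f(6) in auto)
      moreover have "Suc i = p" by (rule inj) (use 1 vp i(2) f(6) in auto)
      ultimately have "p = 1" by simp
      then show False using p by simp
    next
      case 2
      have "Suc i = 0" by (rule inj) (use 2 v0 i(2) f(6) in auto)
      then show False by simp
    qed
  qed
  then show ?thesis using f(1) by (simp add: incidence_pv[symmetric] incidence_vec_def)
qed

lemma pv_notE: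
  assumes P: "is_p_path (KE n) n p vs" and e: "e \<notin> KE n"
  shows "pv vs e = 0"
proof -
  have "e \<notin> path_edges vs" using P e by (auto simp: is_p_path_def path_edges_def)
  then show ?thesis using path_facts(1)[OF P] by (simp add: incidence_pv[symmetric] incidence_vec_def)
qed

lemma deg_end:
  assumes P: "is_p_path (KE n) n p vs" and n: "0 < n"
  shows "deg (KE n) 0 (pv vs) = 1" "deg (KE n) n (pv vs) = 1"
proof -
  note f = path_facts[OF P]
  have "0 \<in> set vs" "n \<in> set vs" using f(3,4,5) hd_in_set last_in_set by metis+
  then show "deg (KE n) 0 (pv vs) = 1" "deg (KE n) n (pv vs) = 1"
    using deg_pv[OF f(1,2,3)] f n by auto
qed

lemma tot_path:
  assumes P: "is_p_path (KE n) n p vs"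
  shows "tot (KE n) (pv vs) = real p"
  using tot_pv[OF path_facts(1,2,3)[OF P]] path_facts(6)[OF P] by simp

lemma deg_mid:
  assumes P: "is_p_path (KE n) n n vs" and v: "v \<in> {1..<n}"
  shows "deg (KE n) v (pv vs) = 2"
proof -
  note f = path_facts[OF P]
  have "card (set vs) = n + 1" using f(1,6) distinct_card by metis
  then have "set vs = {0..n}" using f(2) by (intro card_subset_eq) auto
  then show ?thesis using deg_pv[OF f(1,2,3)] f v by auto
qed

lemma fz_ev: "g \<in> span (DS n p) \<Longrightarrow> (\<And>vs. is_p_path (KE n) n p vs \<Longrightarrow> pv vs e = 0) \<Longrightarrow> g e = 0"
  by (rule func_zero[where \<phi> = "\<lambda>f. f e" and c = 0]) (auto simp: scaleR_fun_def)

lemma fz_deg: "g \<in> span (DS n p) \<Longrightarrow> (\<And>vs. is_p_path (KE n) n p vs \<Longrightarrow> deg (KE n) v (pv vs) = c) \<Longrightarrow> deg (KE n) v g = 0"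
  by (rule func_zero[where \<phi> = "deg (KE n) v" and c = c]) (auto simp: deg_add deg_sc)

lemma fz_tot: "g \<in> span (DS n p) \<Longrightarrow> (\<And>vs. is_p_path (KE n) n p vs \<Longrightarrow> tot (KE n) (pv vs) = c) \<Longrightarrow> tot (KE n) g = 0"
  by (rule func_zero[where \<phi> = "tot (KE n)" and c = c]) (auto simp: tot_add tot_sc)

lemma upA:
  assumes n4: "4 \<le> n" and p: "2 \<le> p" and g: "g \<in> span (DS n p)" and van: "\<forall>e. e \<notin> SA n \<longrightarrow> g e = 0"
  shows "g = 0"
proof -
  have g0n: "g {0,n} = 0" by (rule fz_ev[OF g]) (rule pv_0n[OF _ p])
  have d0: "deg (KE n) 0 g = 0" by (rule fz_deg[OF g]) (rule deg_end(1), use n4 in auto)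
  have dn: "deg (KE n) n g = 0" by (rule fz_deg[OF g]) (rule deg_end(2), use n4 in auto)
  have t: "tot (KE n) g = 0" by (rule fz_tot[OF g]) (rule tot_path)
  have z: "g x = 0" if "x \<notin> SA n" for x using van that by blast
  have "deg (KE n) 0 g = (if 0 \<in> {0,1::nat} then g {0,1} else 0)"
    unfolding deg_def
  proof (rule sum_single[OF KE_fin KE_mem])
    fix x assume "x \<in> KE n" "x \<noteq> {0,1}"
    then show "(if 0 \<in> x then g x else 0) = 0"
    proof (cases "0 \<in> x \<and> x \<in> SA n")
      case True then have "x = {0,n}" using \<open>x \<noteq> {0,1}\<close> n4 by (auto simp: SA_def)
      then show ?thesis using g0n by simp
    qed (use z[of x] in auto)
  qed (use n4 in auto)
  then have g01: "g {0,1} = 0" using d0 by simp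
  have "deg (KE n) n g = (if n \<in> {1,n} then g {1,n} else 0)"
    unfolding deg_def
  proof (rule sum_single[OF KE_fin KE_mem])
    fix x assume "x \<in> KE n" "x \<noteq> {1,n}"
    then show "(if n \<in> x then g x else 0) = 0"
    proof (cases "n \<in> x \<and> x \<in> SA n")
      case True then have "x = {0,n}" using \<open>x \<noteq> {1,n}\<close> n4 by (auto simp: SA_def)
      then show ?thesis using g0n by simp
    qed (use z[of x] in auto)
  qed (use n4 in auto)
  then have g1n: "g {1,n} = 0" using dn by simp
  have "tot (KE n) g = g {1,2}"
    unfolding tot_def
  proof (rule sum_single[OF KE_fin KE_mem])
    fix x assume "x \<in> KE n" "x \<noteq> {1,2}"
    then show "g x = 0"
    proof (cases "x \<in> SA n")
      case True then have "x = {0,n} \<or> x = {0,1} \<or> x = {1,n}" using \<open>x \<noteq> {1,2}\<close> by (auto simp: SA_def)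
      then show ?thesis using g0n g01 g1n by auto
    qed (use z[of x] in auto)
  qed (use n4 in auto)
  then have g12: "g {1,2} = 0" using t by simp
  show "g = 0"
  proof
    fix x show "g x = 0 x" using z[of x] g0n g01 g1n g12 by (auto simp: SA_def)
  qed
qed

lemma upB:
  assumes n4: "4 \<le> n" and g: "g \<in> span (DS n n)" and van: "\<forall>e. e \<notin> SB n \<longrightarrow> g e = 0"
  shows "g = 0"
proof -
  have z: "g x = 0" if "x \<notin> SB n" for x using van that by blast
  have g0n: "g {0,n} = 0" by (rule fz_ev[OF g]) (rule pv_0n, use n4 in auto)
  have dv: "deg (KE n) v g = 0" if v: "v \<le> n" for v
  proof (cases "v = 0 \<or> v = n")
    case True then show ?thesis
      using fz_deg[OF g, of v 1] deg_end[of n n _] n4 by auto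
  next
    case False
    then have "v \<in> {1..<n}" using v by auto
    then show ?thesis using fz_deg[OF g, of v 2] deg_mid by auto
  qed
  have leaf: "g {1,v} = 0" if v: "v \<le> n" "v \<noteq> 1" "v \<noteq> 2" "v \<noteq> 3" for v
  proof -
    have "deg (KE n) v g = (if v \<in> {1,v} then g {1,v} else 0)"
      unfolding deg_def
    proof (rule sum_single[OF KE_fin KE_mem])
      fix x assume x: "x \<in> KE n" "x \<noteq> {1,v}"
      show "(if v \<in> x then g x else 0) = 0"
      proof (cases "v \<in> x \<and> x \<in> SB n")
        case True
        then show ?thesis using x g0n v by (auto simp: SB_def)
      next
        case False then show ?thesis using z[of x] by auto
      qed
    qed (use v n4 in auto)
    then show ?thesis using dv[OF v(1)] by simp
  qed
  have e2: "g {1,2} + g {2,3} = 0"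
  proof -
    have "deg (KE n) 2 g = (if 2 \<in> {1,2::nat} then g {1,2} else 0) + (if 2 \<in> {2,3::nat} then g {2,3} else 0)"
      unfolding deg_def
    proof (rule sum_two[OF KE_fin KE_mem KE_mem])
      fix x assume x: "x \<in> KE n" "x \<noteq> {1,2}" "x \<noteq> {2,3}"
      show "(if 2 \<in> x then g x else 0) = 0"
      proof (cases "2 \<in> x \<and> x \<in> SB n")
        case True
        then show ?thesis using x g0n n4 by (auto simp: SB_def)
      next
        case False then show ?thesis using z[of x] by auto
      qed
    qed (use n4 in \<open>auto simp: doubleton_eq_iff\<close>)
    then show ?thesis using dv[of 2] n4 by simp
  qed
  have e3: "g {1,3} + g {2,3} = 0"
  proof -
    have "deg (KE n) 3 g = (if 3 \<in> {1,3::nat} then g {1,3} else 0) + (if 3 \<in> {2,3::nat} then g {2,3} else 0)"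
      unfolding deg_def
    proof (rule sum_two[OF KE_fin KE_mem KE_mem])
      fix x assume x: "x \<in> KE n" "x \<noteq> {1,3}" "x \<noteq> {2,3}"
      show "(if 3 \<in> x then g x else 0) = 0"
      proof (cases "3 \<in> x \<and> x \<in> SB n")
        case True
        then show ?thesis using x g0n n4 by (auto simp: SB_def)
      next
        case False then show ?thesis using z[of x] by auto
      qed
    qed (use n4 in \<open>auto simp: doubleton_eq_iff\<close>)
    then show ?thesis using dv[of 3] n4 by simp
  qed
  have e1: "g {1,2} + g {1,3} = 0"
  proof -
    have "deg (KE n) 1 g = (if 1 \<in> {1,2::nat} then g {1,2} else 0) + (if 1 \<in> {1,3::nat} then g {1,3} else 0)"
      unfolding deg_def
    proof (rule sum_two[OF KE_fin KE_mem KE_mem])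
      fix x assume x: "x \<in> KE n" "x \<noteq> {1,2}" "x \<noteq> {1,3}"
      show "(if 1 \<in> x then g x else 0) = 0"
      proof (cases "1 \<in> x \<and> x \<in> SB n")
        case True
        then obtain u where u: "x = {1,u}" "u \<le> n" "u \<noteq> 1" using x n4 by (auto simp: SB_def)
        then have "u \<noteq> 2" "u \<noteq> 3" using x by auto
        then show ?thesis using leaf[of u] u by auto
      next
        case False then show ?thesis using z[of x] by auto
      qed
    qed (use n4 in \<open>auto simp: doubleton_eq_iff\<close>)
    then show ?thesis using dv[of 1] n4 by simp
  qed
  have g12: "g {1,2} = 0" "g {1,3} = 0" "g {2,3} = 0" using e1 e2 e3 by linarith+
  show "g = 0"
  proof
    fix x show "g x = 0 x"
    proof (cases "x \<in> SB n")
      case True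
      then consider "x = {0,n}" | "x = {2,3}" | u where "x = {1,u}" "u \<le> n" "u \<noteq> 1"
        by (auto simp: SB_def)
      then show ?thesis
      proof cases
        case 3
        then show ?thesis using leaf[of u] g12 by (cases "u = 2 \<or> u = 3") auto
      qed (use g0n g12 in auto)
    next
      case False then show ?thesis using z by simp
    qed
  qed
qed

lemma PP_ne: assumes "1 \<le> p" "p \<le> n" shows "PPn n p \<noteq> {}"
proof -
  have "is_p_path (KE n) n p (0 # [1..<p] @ [n])"
    by (rule mk_path) (use assms in auto)
  then show ?thesis using pv_in_PP by blast
qed


lemma neq_by: "x \<in> A \<Longrightarrow> x \<notin> B \<Longrightarrow> A \<noteq> B" by blast

lemma SA_card: assumes "4 \<le> (n::nat)" shows "card (SA n) = 4"
proof -
  have a: "{0,n} \<noteq> {0,1::nat}" by (rule neq_by[of n]) (use assms in simp_all)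
  have b: "{0,n} \<noteq> {1,n}" by (rule neq_by[of 0]) (use assms in simp_all)
  have c: "{0,n} \<noteq> {1,2::nat}" by (rule neq_by[of 0]) (use assms in simp_all)
  have d: "{0,1} \<noteq> {1,n}" by (rule neq_by[of 0]) (use assms in simp_all)
  have e: "{0,1} \<noteq> {1,2::nat}" by (rule neq_by[of 0]) (use assms in simp_all)
  have f: "{1,n} \<noteq> {1,2::nat}" by (rule neq_by[of n]) (use assms in simp_all)
  have "card {{1,n},{1,2::nat}} = 2" using f by simp
  moreover have "card {{0,1},{1,n},{1,2::nat}} = 3" using d e calculation by simp
  moreover have "card {{0,n},{0,1},{1,n},{1,2::nat}} = 4" using a b c calculation by simp
  ultimately show ?thesis unfolding SA_def by simp
qed

lemma SA_sub: "4 \<le> n \<Longrightarrow> SA n \<subseteq> KE n"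
  by (auto simp: SA_def intro!: KE_mem)

lemma SB_alt: "SB n = {{0,n},{2,3}} \<union> (\<lambda>v. {1,v}) ` ({0..n} - {1})"
  by (auto simp: SB_def)

lemma SB_card: assumes n: "4 \<le> n" shows "card (SB n) = n + 2"
proof -
  have inj: "inj_on (\<lambda>v. {1::nat,v}) ({0..n} - {1})"
  proof (rule inj_onI)
    fix x y assume "x \<in> {0..n} - {1}" "y \<in> {0..n} - {1}" "{1::nat,x} = {1,y}"
    then have "x \<in> {1,y}" "x \<noteq> 1" by blast+
    then show "x = y" by simp
  qed
  have c0: "card ({0..n} - {1::nat}) = n" using n by (simp add: card_Diff_singleton)
  have c1: "card ((\<lambda>v. {1::nat,v}) ` ({0..n} - {1})) = n"
    using card_image[OF inj] c0 by simp
  have ne: "{0,n} \<noteq> {2,3::nat}" by (rule neq_by[of 0]) simp_all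
  have c2: "card {{0,n},{2,3::nat}} = 2" using ne by simp
  have dj: "{{0,n},{2,3::nat}} \<inter> (\<lambda>v. {1,v}) ` ({0..n} - {1}) = {}"
  proof (rule equals0I)
    fix x assume x: "x \<in> {{0,n},{2,3::nat}} \<inter> (\<lambda>v. {1,v}) ` ({0..n} - {1})"
    then obtain v where v: "x = {1,v}" by blast
    have "1 \<in> x" using v by simp
    moreover have "x = {0,n} \<or> x = {2,3}" using x by blast
    ultimately show False using n by auto
  qed
  have fin: "finite ((\<lambda>v. {1::nat,v}) ` ({0..n} - {1}))" by simp
  have "card (SB n) = card {{0,n},{2,3::nat}} + card ((\<lambda>v. {1::nat,v}) ` ({0..n} - {1}))"
    unfolding SB_alt by (rule card_Un_disjoint[OF _ fin dj]) simp
  then show ?thesis using c1 c2 by simp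
qed

lemma SB_sub: "4 \<le> n \<Longrightarrow> SB n \<subseteq> KE n"
  by (auto simp: SB_def intro!: KE_mem)

lemma delta_ch: "e \<in> KE n \<Longrightarrow> \<exists>i j. i \<le> n \<and> j \<le> n \<and> i \<noteq> j \<and> (\<lambda>x. if x = e then 1 else 0) = ch i j"
proof -
  assume "e \<in> KE n"
  then obtain i j where "e = {i,j}" "i \<le> n" "j \<le> n" "i \<noteq> j" by (auto simp: complete_edges_def)
  then show ?thesis unfolding ch_def by blast
qed

lemma dimA: assumes "4 \<le> p" "p \<le> n - 1"
  shows "dim (DS n p) = card (KE n) - 4"
proof -
  have n: "4 \<le> n" using assms by simp
  have "dim (DS n p) = card (KE n) - card (SA n)"
  proof (rule dim_assembly[OF KE_fin SA_sub[OF n]])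
    fix g e assume "g \<in> span (DS n p)" "e \<notin> KE n"
    then show "g e = 0" using fz_ev pv_notE by blast
  next
    fix g assume "g \<in> span (DS n p)" "\<forall>e. e \<notin> SA n \<longrightarrow> g e = 0"
    then show "g = 0" by (intro upA[OF n]) (use assms in auto)
  next
    fix e assume "e \<in> KE n - SA n"
    then obtain i j where ij: "i \<le> n" "j \<le> n" "i \<noteq> j" "(\<lambda>x. if x = e then 1 else 0) = ch i j"
      using delta_ch by blast
    show "(\<lambda>x. if x = e then 1 else 0) \<in> span (DS n p \<union> {g. \<forall>e\<in>KE n - SA n. g e = 0})"
      using caseA_low[OF assms ij(1-3)] ij(4) by (simp add: Zs_def)
  qed
  then show ?thesis using SA_card[OF n] by simp
qed

lemma dimB: assumes "4 \<le> n"
  shows "dim (DS n n) = card (KE n) - (n + 2)"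
proof -
  have "dim (DS n n) = card (KE n) - card (SB n)"
  proof (rule dim_assembly[OF KE_fin SB_sub[OF assms]])
    fix g e assume "g \<in> span (DS n n)" "e \<notin> KE n"
    then show "g e = 0" using fz_ev pv_notE by blast
  next
    fix g assume "g \<in> span (DS n n)" "\<forall>e. e \<notin> SB n \<longrightarrow> g e = 0"
    then show "g = 0" using upB[OF assms] by simp
  next
    fix e assume "e \<in> KE n - SB n"
    then obtain i j where ij: "i \<le> n" "j \<le> n" "i \<noteq> j" "(\<lambda>x. if x = e then 1 else 0) = ch i j"
      using delta_ch by blast
    show "(\<lambda>x. if x = e then 1 else 0) \<in> span (DS n n \<union> {g. \<forall>e\<in>KE n - SB n. g e = 0})"
      using caseB_low[OF assms ij(1-3)] ij(4) by (simp add: Zs_def)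
  qed
  then show ?thesis using SB_card[OF assms] by simp
qed

theorem mainTheorem18:
  fixes n p :: nat
  assumes "4 \<le> p" and "p \<le> n"
  shows "(p \<le> n - 1 \<longrightarrow>
            affine_dimension (path_polytope (complete_edges n) n p)
              = int (card (complete_edges n)) - 4)
       \<and> (p = n \<longrightarrow>
            affine_dimension (path_polytope (complete_edges n) n p)
              = int (card (complete_edges n)) - int n - 2)"
proof (intro conjI impI)
  have ne: "PPn n p \<noteq> {}" using PP_ne assms by simp
  have n: "4 \<le> n" using assms by simp
  {
    assume p1: "p \<le> n - 1"
    have "card (SA n) \<le> card (KE n)" using card_mono[OF KE_fin SA_sub[OF n]] .
    then have c: "4 \<le> card (KE n)" using SA_card[OF n] by simp
    show "affine_dimension (PPn n p) = int (card (KE n)) - 4"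
      using dimA[OF assms(1) p1] ne c unfolding affine_dimension_def by simp
  }
  {
    assume pn: "p = n"
    have "card (SB n) \<le> card (KE n)" using card_mono[OF KE_fin SB_sub[OF n]] .
    then have c: "n + 2 \<le> card (KE n)" using SB_card[OF n] by simp
    show "affine_dimension (PPn n p) = int (card (KE n)) - int n - 2"
      using dimB[OF n] ne c pn unfolding affine_dimension_def by simp
  }
qed

end
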